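(* The function $\omega(x)\,p_+(x)^7$ is increasing on the interval $[1,5]$.
   Context: For $x\ge1$ let $\psi_1(x)=\frac32\int_0^{\pi/2}(1-x^{-2}\sin^2u)^{3/2}\,du$, $\psi_2(x)=\frac32(1-x^{-2})^2\int_0^{\pi/2}\frac{\sin^4v}{\sqrt{1-(1-x^{-2})\sin^2v}}\,dv$, $\omega(x)=\psi_2'(x)\psi_1(x)-\psi_2(x)\psi_1'(x)$ and $p_+(x)=\sqrt{\psi_1(x)^2+\psi_2(x)^2}$. *)

theory Defs
  imports "HOL-Analysis.Analysis"
begin

definition psi1 :: "real \<Rightarrow> real" where
  "psi1 x = 3/2 * integral {0..pi/2} (\<lambda>u. (1 - (sin u)\<^sup>2 / x\<^sup>2) powr (3/2))"

definition psi2 :: "real \<Rightarrow> real" where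
  "psi2 x = 3/2 * (1 - 1 / x\<^sup>2)\<^sup>2 *
     integral {0..pi/2} (\<lambda>v. (sin v) ^ 4 / sqrt (1 - (1 - 1 / x\<^sup>2) * (sin v)\<^sup>2))"

text \<open>Derivatives are taken for the functions on their domain x \<ge> 1
  (so at x = 1 this is the right derivative).\<close>
definition omega :: "real \<Rightarrow> real" where
  "omega x = vector_derivative psi2 (at x within {1..}) * psi1 x
             - psi2 x * vector_derivative psi1 (at x within {1..})"

definition pplus :: "real \<Rightarrow> real" where
  "pplus x = sqrt ((psi1 x)\<^sup>2 + (psi2 x)\<^sup>2)"

end

theory Submission
  imports Defs
begin

definition Ipow :: "nat \<Rightarrow> real \<Rightarrow> real \<Rightarrow> real" where
  "Ipow j a m = integral {0..pi/2} (\<lambda>u. sin u ^ j * (1 - m * (sin u)\<^sup>2) powr a)"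

lemma base_pos: fixes m u :: real assumes "\<bar>m\<bar> < 1" shows "0 < 1 - m * (sin u)\<^sup>2"
proof -
  have "\<bar>m * (sin u)\<^sup>2\<bar> \<le> \<bar>m\<bar>"
    using abs_sin_le_one[of u] by (simp add: abs_mult mult_left_le abs_square_le_1)
  then show ?thesis using assms by linarith
qed

lemma Ipow_integrable: assumes "\<bar>m\<bar> < 1"
  shows "(\<lambda>u. sin u ^ j * (1 - m * (sin u)\<^sup>2) powr a) integrable_on {0..pi/2}"
proof -
  have "continuous_on {0..pi/2} (\<lambda>u. sin u ^ j * (1 - m * (sin u)\<^sup>2) powr a)"
    using base_pos[OF assms] by (intro continuous_intros) (auto simp: less_imp_neq[symmetric] dest: sym)
  then show ?thesis by (rule integrable_continuous_interval)
qed

lemma Ipow_deriv: assumes "\<bar>m\<bar> < 1"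
  shows "(Ipow j a has_real_derivative (- a * Ipow (j+2) (a-1) m)) (at m)"
proof -
  let ?U = "{-1<..<(1::real)}"
  let ?f = "\<lambda>m u. sin u ^ j * (1 - m * (sin u)\<^sup>2) powr a"
  let ?fx = "\<lambda>m u. - a * (sin u ^ (j+2) * (1 - m * (sin u)\<^sup>2) powr (a-1))"
  have "((\<lambda>m. integral (cbox 0 (pi/2)) (?f m)) has_field_derivative integral (cbox 0 (pi/2)) (?fx m)) (at m within ?U)"
  proof (rule leibniz_rule_field_derivative)
    fix x t assume x: "x \<in> ?U" and t: "t \<in> cbox 0 (pi/2)"
    have bp: "0 < 1 - x * (sin t)\<^sup>2" using x by (intro base_pos) auto
    show "((\<lambda>x. ?f x t) has_field_derivative ?fx x t) (at x within ?U)"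
      apply (rule has_field_derivative_at_within)
      using bp
      apply (auto intro!: derivative_eq_intros simp: power2_eq_square)
      done
  next
    fix x assume "x \<in> ?U"
    then show "?f x integrable_on cbox 0 (pi/2)" using Ipow_integrable[of x] by auto
  next
    show "continuous_on (?U \<times> cbox 0 (pi/2)) (\<lambda>(x, t). ?fx x t)"
      unfolding case_prod_unfold
    proof (intro continuous_intros ballI)
      fix p assume "p \<in> ?U \<times> cbox 0 (pi/2)"
      then have "\<bar>fst p\<bar> < 1" by (auto simp: abs_less_iff)
      from base_pos[OF this, of "snd p"] show "1 - fst p * (sin (snd p))\<^sup>2 \<noteq> 0" by simp
    qed
  qed (use assms in auto)
  then have "((\<lambda>m. integral {0..pi/2} (?f m)) has_real_derivative integral {0..pi/2} (?fx m)) (at m)"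
    using at_within_open[of m ?U] assms by (auto simp: abs_less_iff)
  moreover have "(\<lambda>m. integral {0..pi/2} (?f m)) = Ipow j a" by (rule ext) (simp add: Ipow_def)
  moreover have "integral {0..pi/2} (?fx m) = - a * Ipow (j+2) (a-1) m"
    unfolding Ipow_def by (rule integral_mult_right)
  ultimately show ?thesis by (simp only:)
qed


lemma Ipow_has_integral: assumes "\<bar>m\<bar> < 1"
  shows "((\<lambda>u. sin u ^ j * (1 - m * (sin u)\<^sup>2) powr a) has_integral Ipow j a m) {0..pi/2}"
  unfolding Ipow_def using Ipow_integrable[OF assms] by (rule integrable_integral)

lemma powr_facts: fixes q :: real assumes "0 < q"
  shows "q powr (-1/2) = 1 / q powr (1/2)" "q powr (3/2) = q * q powr (1/2)"
        "q powr (1/2) * q powr (1/2) = q" "q powr (1/2 - 1) = 1 / q powr (1/2)"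
        "q powr (-3/2) = 1 / (q * q powr (1/2))" "q powr (-5/2) = 1 / (q * q * q powr (1/2))"
        "q powr (-1/2 - 1) = 1 / (q * q powr (1/2))" "q powr (-3/2 - 1) = 1 / (q * q * q powr (1/2))"
proof -
  have a: "q powr (a + b) = q powr a * q powr b" for a b by (rule powr_add)
  have m: "q powr (- a) = 1 / q powr a" for a by (simp add: powr_minus_divide)
  have h: "q powr (1/2) * q powr (1/2) = q" using a[of "1/2" "1/2"] assms by simp
  have t: "q powr (3/2) = q * q powr (1/2)" using a[of 1 "1/2"] assms by simp
  have f: "q powr (5/2) = q * q * q powr (1/2)" using a[of 1 "3/2"] assms t by simp
  show "q powr (-1/2) = 1 / q powr (1/2)" using m[of "1/2"] by simp
  show "q powr (3/2) = q * q powr (1/2)" by (rule t)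
  show "q powr (1/2) * q powr (1/2) = q" by (rule h)
  show "q powr (1/2 - 1) = 1 / q powr (1/2)" using m[of "1/2"] by simp
  show "q powr (-3/2) = 1 / (q * q powr (1/2))" using m[of "3/2"] t by simp
  show "q powr (-5/2) = 1 / (q * q * q powr (1/2))" using m[of "5/2"] f by simp
  show "q powr (-1/2 - 1) = 1 / (q * q powr (1/2))" using m[of "3/2"] t by simp
  show "q powr (-3/2 - 1) = 1 / (q * q * q powr (1/2))" using m[of "5/2"] f by simp
qed

lemma alg1: fixes R m ss cc :: real
  assumes "R * R = 1 - m * ss\<^sup>2" "cc\<^sup>2 = 1 - ss\<^sup>2" "R > 0"
  shows "(3/4) * (cc * cc - ss * ss) * R + (1/2) * (1/R) * (-2 * m * ss * cc) * ((3/4) * ss * cc)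
     = m * (1-m) * (3/4) * (ss^4 * (1/R)) + (-(3/2)) * (ss\<^sup>2 * R) + (3/4) * (1 * ((1 - m * ss\<^sup>2) * R))"
proof -
  have "R \<noteq> 0" using assms by simp
  then show ?thesis using assms apply (simp add: field_simps)
    by algebra
qed

lemma E1: assumes "\<bar>m\<bar> < 1"
  shows "m * (1-m) * (3/4) * Ipow 4 (-1/2) m - (3/2) * Ipow 2 (1/2) m + (3/4) * Ipow 0 (3/2) m = 0"
proof -
  define g where "g u = (3/4) * sin u * cos u * (1 - m * (sin u)\<^sup>2) powr (1/2)" for u
  define h where "h u = m * (1-m) * (3/4) * (sin u ^ 4 * (1 - m * (sin u)\<^sup>2) powr (-1/2))
     + (-(3/2)) * (sin u ^ 2 * (1 - m * (sin u)\<^sup>2) powr (1/2))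
     + (3/4) * (sin u ^ 0 * (1 - m * (sin u)\<^sup>2) powr (3/2))" for u
  have hd: "(g has_real_derivative h u) (at u)" for u
  proof -
    have q: "0 < 1 - m * (sin u)\<^sup>2" by (rule base_pos[OF assms])
    have dq: "((\<lambda>u. 1 - m * (sin u)\<^sup>2) has_real_derivative (-(m * (2 * sin u * cos u)))) (at u)"
      by (auto intro!: derivative_eq_intros)
    have dP: "((\<lambda>u. (1 - m * (sin u)\<^sup>2) powr (1/2)) has_real_derivative
        (1/2) * (1 - m * (sin u)\<^sup>2) powr (1/2 - of_nat 1) * (-(m * (2 * sin u * cos u)))) (at u)"
      by (rule DERIV_fun_powr[OF dq q])
    have dS: "((\<lambda>u. (3/4) * sin u * cos u) has_real_derivative (3/4) * (cos u * cos u - sin u * sin u)) (at u)"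
      by (rule derivative_eq_intros refl | simp)+
    have D: "((\<lambda>u. (3/4) * sin u * cos u * (1 - m * (sin u)\<^sup>2) powr (1/2)) has_real_derivative
       (3/4) * (cos u * cos u - sin u * sin u) * (1 - m * (sin u)\<^sup>2) powr (1/2) +
       (1/2) * (1 - m * (sin u)\<^sup>2) powr (1/2 - of_nat 1) * (-(m * (2 * sin u * cos u))) * ((3/4) * sin u * cos u)) (at u)"
      by (rule DERIV_mult[OF dS dP])
    define R where "R = (1 - m * (sin u)\<^sup>2) powr (1/2)"
    have R: "R * R = 1 - m * (sin u)\<^sup>2" "R > 0" using powr_facts(3)[OF q] q by (auto simp: R_def)
    have e: "(3/4) * (cos u * cos u - sin u * sin u) * (1 - m * (sin u)\<^sup>2) powr (1/2) +
       (1/2) * (1 - m * (sin u)\<^sup>2) powr (1/2 - of_nat 1) * (-(m * (2 * sin u * cos u))) * ((3/4) * sin u * cos u) = h u"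
      unfolding h_def using powr_facts[OF q] alg1[OF R(1) cos_squared_eq[of u] R(2)]
      by (simp add: R_def[symmetric])
    show ?thesis unfolding g_def using D e by (simp add: mult.assoc)
  qed
  have "(h has_integral (g (pi/2) - g 0)) {0..pi/2}"
    by (rule fundamental_theorem_of_calculus) (auto intro!: has_real_derivative_iff_has_vector_derivative[THEN iffD1, OF has_field_derivative_at_within[OF hd]])
  then have h0: "(h has_integral 0) {0..pi/2}" by (simp add: g_def)
  have "(h has_integral (m * (1-m) * (3/4) * Ipow 4 (-1/2) m + (-(3/2)) * Ipow 2 (1/2) m + (3/4) * Ipow 0 (3/2) m)) {0..pi/2}"
    unfolding h_def
    by (intro has_integral_add has_integral_mult_right Ipow_has_integral assms)
  from has_integral_unique[OF this h0] show ?thesis by simp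
qed


lemma alg2: fixes R n ss cc r :: real
  assumes "R * R = r" "r = 1 - n * ss\<^sup>2" "cc\<^sup>2 = 1 - ss\<^sup>2" "R > 0"
  shows "(-(1/4)) * (5 * ss ^ 4 * cc * cc - ss ^ 6) * (1 / (r * R))
     + (-3/2) * (1 / (r * r * R)) * (-(n * (2 * ss * cc))) * ((-(1/4)) * ss ^ 5 * cc)
   = n * (1 - n) * (3/4) * (ss ^ 8 * (1 / (r * r * R)))
     + (3 - 4 * n) * (1/2) * (ss ^ 6 * (1 / (r * R)))
     + (-(5/4)) * (ss ^ 4 * (1 / R))"
proof -
  have "R \<noteq> 0" using assms by simp
  have "r \<noteq> 0" using assms(1) assms(4) by (metis mult_pos_pos order_less_irrefl)
  with \<open>R \<noteq> 0\<close> show ?thesis using assms apply (simp add: field_simps)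
    by algebra
qed

lemma E2: assumes "\<bar>n\<bar> < 1"
  shows "n * (1 - n) * (3/4) * Ipow 8 (-5/2) n + (3 - 4 * n) * (1/2) * Ipow 6 (-3/2) n + (-(5/4)) * Ipow 4 (-1/2) n = 0"
proof -
  define g where "g u = (-(1/4)) * sin u ^ 5 * cos u * (1 - n * (sin u)\<^sup>2) powr (-3/2)" for u
  define h where "h u = n * (1 - n) * (3/4) * (sin u ^ 8 * (1 - n * (sin u)\<^sup>2) powr (-5/2))
     + (3 - 4 * n) * (1/2) * (sin u ^ 6 * (1 - n * (sin u)\<^sup>2) powr (-3/2))
     + (-(5/4)) * (sin u ^ 4 * (1 - n * (sin u)\<^sup>2) powr (-1/2))" for u
  have hd: "(g has_real_derivative h u) (at u)" for u
  proof -
    have q: "0 < 1 - n * (sin u)\<^sup>2" by (rule base_pos[OF assms])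
    have dq: "((\<lambda>u. 1 - n * (sin u)\<^sup>2) has_real_derivative (-(n * (2 * sin u * cos u)))) (at u)"
      by (auto intro!: derivative_eq_intros)
    have dP: "((\<lambda>u. (1 - n * (sin u)\<^sup>2) powr (-3/2)) has_real_derivative
        (-3/2) * (1 - n * (sin u)\<^sup>2) powr (-3/2 - of_nat 1) * (-(n * (2 * sin u * cos u)))) (at u)"
      by (rule DERIV_fun_powr[OF dq q])
    have dS: "((\<lambda>u. (-(1/4)) * sin u ^ 5 * cos u) has_real_derivative (-(1/4)) * (5 * sin u ^ 4 * cos u * cos u - sin u ^ 6)) (at u)"
      by (rule derivative_eq_intros refl | simp)+ (simp add: field_simps, algebra)
    have D: "((\<lambda>u. (-(1/4)) * sin u ^ 5 * cos u * (1 - n * (sin u)\<^sup>2) powr (-3/2)) has_real_derivative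
       (-(1/4)) * (5 * sin u ^ 4 * cos u * cos u - sin u ^ 6) * (1 - n * (sin u)\<^sup>2) powr (-3/2) +
       (-3/2) * (1 - n * (sin u)\<^sup>2) powr (-3/2 - of_nat 1) * (-(n * (2 * sin u * cos u))) * ((-(1/4)) * sin u ^ 5 * cos u)) (at u)"
      by (rule DERIV_mult[OF dS dP])
    define R where "R = (1 - n * (sin u)\<^sup>2) powr (1/2)"
    have R: "R * R = 1 - n * (sin u)\<^sup>2" "R > 0" using powr_facts(3)[OF q] q by (auto simp: R_def)
    have e: "(-(1/4)) * (5 * sin u ^ 4 * cos u * cos u - sin u ^ 6) * (1 - n * (sin u)\<^sup>2) powr (-3/2) +
       (-3/2) * (1 - n * (sin u)\<^sup>2) powr (-3/2 - of_nat 1) * (-(n * (2 * sin u * cos u))) * ((-(1/4)) * sin u ^ 5 * cos u) = h u"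
      unfolding h_def using powr_facts[OF q] alg2[OF R(1) refl cos_squared_eq[of u] R(2)]
      by (simp add: R_def[symmetric])
    show ?thesis unfolding g_def using D e by (simp add: mult.assoc)
  qed
  have "(h has_integral (g (pi/2) - g 0)) {0..pi/2}"
    by (rule fundamental_theorem_of_calculus) (auto intro!: has_real_derivative_iff_has_vector_derivative[THEN iffD1, OF has_field_derivative_at_within[OF hd]])
  then have h0: "(h has_integral 0) {0..pi/2}" by (simp add: g_def)
  have "(h has_integral (n * (1 - n) * (3/4) * Ipow 8 (-5/2) n + (3 - 4 * n) * (1/2) * Ipow 6 (-3/2) n + (-(5/4)) * Ipow 4 (-1/2) n)) {0..pi/2}"
    unfolding h_def
    by (intro has_integral_add has_integral_mult_right Ipow_has_integral assms)
  from has_integral_unique[OF this h0] show ?thesis by simp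
qed


lemma Ipow_deriv_chain[derivative_intros]:
  "(f has_real_derivative f') (at x within S) \<Longrightarrow> \<bar>f x\<bar> < 1 \<Longrightarrow>
   ((\<lambda>x. Ipow j a (f x)) has_real_derivative (- a * Ipow (j+2) (a-1) (f x)) * f') (at x within S)"
  by (rule DERIV_chain2[OF Ipow_deriv])

lemma Ipow2: "Ipow (Suc (Suc 0)) = Ipow 2" by (simp add: numeral_2_eq_2)

definition V :: "real \<Rightarrow> real" where
  "V m = (2 * (1-m) * Ipow 4 (-1/2) (1-m) + (1/2) * (1-m)\<^sup>2 * Ipow 6 (-3/2) (1-m)) * Ipow 0 (3/2) m
        - (3/2) * (1-m)\<^sup>2 * Ipow 4 (-1/2) (1-m) * Ipow 2 (1/2) m"

lemma V_deriv: assumes "0 < m" "m < 1"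
  shows "(V has_real_derivative
     ((-2 * Ipow 4 (-1/2) (1-m) - 2 * (1-m) * Ipow 6 (-3/2) (1-m) - (3/4) * (1-m)\<^sup>2 * Ipow 8 (-5/2) (1-m)) * Ipow 0 (3/2) m
     + (2 * (1-m) * Ipow 4 (-1/2) (1-m) + (1/2) * (1-m)\<^sup>2 * Ipow 6 (-3/2) (1-m)) * (-(3/2) * Ipow 2 (1/2) m)
     - (3/2) * (-2 * (1-m) * Ipow 4 (-1/2) (1-m) * Ipow 2 (1/2) m
          + (1-m)\<^sup>2 * (-(1/2) * Ipow 6 (-3/2) (1-m)) * Ipow 2 (1/2) m
          + (1-m)\<^sup>2 * Ipow 4 (-1/2) (1-m) * (-(1/2) * Ipow 4 (-1/2) m)))) (at m)"
proof -
  have a: "\<bar>m\<bar> < 1" "\<bar>1-m\<bar> < 1" using assms by auto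
  show ?thesis unfolding V_def
    apply (auto intro!: derivative_eq_intros simp: a Ipow2)
    apply (simp add: field_simps)
    done
qed


lemma alg3: fixes m n A A1 A2 B0 B1 B2 :: real
  assumes "n = 1 - m"
    "m * (1-m) * (3/4) * A2 - (3/2) * A1 + (3/4) * A = 0"
    "n * (1 - n) * (3/4) * B2 + (3 - 4 * n) * (1/2) * B1 + (-(5/4)) * B0 = 0"
  shows "((-2 * B0 - 2 * n * B1 - (3/4) * n\<^sup>2 * B2) * A
     + (2 * n * B0 + (1/2) * n\<^sup>2 * B1) * (-(3/2) * A1)
     - (3/2) * (-2 * n * B0 * A1 + n\<^sup>2 * (-(1/2) * B1) * A1 + n\<^sup>2 * B0 * (-(1/2) * A2))) * m * (1 - m)
     + ((2 * n * B0 + (1/2) * n\<^sup>2 * B1) * A - (3/2) * n\<^sup>2 * B0 * A1) = 0"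
  using assms by algebra

lemma V_const_deriv: assumes "0 < m" "m < 1"
  shows "((\<lambda>m. V m * m / (1 - m)) has_real_derivative 0) (at m)"
proof -
  have a: "\<bar>m\<bar> < 1" "\<bar>1-m\<bar> < 1" using assms by auto
  note dV = V_deriv[OF assms]
  define V' where "V' = ((-2 * Ipow 4 (-1/2) (1-m) - 2 * (1-m) * Ipow 6 (-3/2) (1-m) - (3/4) * (1-m)\<^sup>2 * Ipow 8 (-5/2) (1-m)) * Ipow 0 (3/2) m
     + (2 * (1-m) * Ipow 4 (-1/2) (1-m) + (1/2) * (1-m)\<^sup>2 * Ipow 6 (-3/2) (1-m)) * (-(3/2) * Ipow 2 (1/2) m)
     - (3/2) * (-2 * (1-m) * Ipow 4 (-1/2) (1-m) * Ipow 2 (1/2) m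
          + (1-m)\<^sup>2 * (-(1/2) * Ipow 6 (-3/2) (1-m)) * Ipow 2 (1/2) m
          + (1-m)\<^sup>2 * Ipow 4 (-1/2) (1-m) * (-(1/2) * Ipow 4 (-1/2) m)))"
  have z: "V' * m * (1 - m) + V m = 0"
    unfolding V'_def V_def
    by (rule alg3[OF refl E1[OF a(1)] E2[OF a(2)]])
  have d1: "((\<lambda>x. V x * x) has_real_derivative (V' * m + 1 * V m)) (at m)"
    using DERIV_mult[OF dV DERIV_ident] by (simp add: V'_def)
  have d2: "((\<lambda>x. 1 - x) has_real_derivative (0 - 1)) (at m)"
    by (rule DERIV_diff[OF DERIV_const DERIV_ident])
  have "((\<lambda>x. V x * x / (1 - x)) has_real_derivative
      ((V' * m + 1 * V m) * (1 - m) - V m * m * (0 - 1)) / ((1 - m) * (1 - m))) (at m)"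
    using DERIV_divide[OF d1 d2] assms by simp
  moreover have "((V' * m + 1 * V m) * (1 - m) - V m * m * (0 - 1)) = 0"
  proof -
    have "((V' * m + 1 * V m) * (1 - m) - V m * m * (0 - 1)) = V' * m * (1 - m) + V m" by algebra
    with z show ?thesis by simp
  qed
  ultimately show ?thesis by simp
qed

lemma V_const: "\<exists>K. \<forall>m\<in>{0<..<1}. V m * m / (1 - m) = K"
  by (rule has_field_derivative_zero_constant)
     (auto intro: has_field_derivative_at_within V_const_deriv)


lemma vd_within: fixes f :: "real \<Rightarrow> real"
  assumes "(f has_real_derivative D) (at x)" "1 \<le> x"
  shows "vector_derivative f (at x within {1..}) = D"
proof (rule vector_derivative_within)
  have "x islimpt {x..x+1}" by simp
  then have "x islimpt {1..}" by (rule islimpt_subset) (use assms in auto)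
  then show "at x within {1..} \<noteq> bot" by (simp add: trivial_limit_within)
  show "(f has_vector_derivative D) (at x within {1..})"
    using has_real_derivative_iff_has_vector_derivative[THEN iffD1, OF has_field_derivative_at_within[OF assms(1)]] .
qed

lemma psi1_eq: "psi1 = (\<lambda>x. 3/2 * Ipow 0 (3/2) (1/x\<^sup>2))"
  by (rule ext) (simp add: psi1_def Ipow_def field_simps)

lemma psi2_eq: "psi2 = (\<lambda>x. 3/2 * (1 - 1/x\<^sup>2)\<^sup>2 * Ipow 4 (-1/2) (1 - 1/x\<^sup>2))"
proof (rule ext)
  fix x :: real
  have "(sin v) ^ 4 / sqrt (1 - (1 - 1 / x\<^sup>2) * (sin v)\<^sup>2) = sin v ^ 4 * (1 - (1 - 1 / x\<^sup>2) * (sin v)\<^sup>2) powr (-1/2)" for v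
  proof -
    let ?r = "1 - (1 - 1 / x\<^sup>2) * (sin v)\<^sup>2"
    have "?r = (1 - (sin v)\<^sup>2) + (sin v)\<^sup>2 / x\<^sup>2" by (simp add: algebra_simps)
    also have "\<dots> = (cos v)\<^sup>2 + (sin v)\<^sup>2 / x\<^sup>2" by (simp add: cos_squared_eq)
    finally have "?r \<ge> 0" by simp
    show ?thesis
    proof (cases "?r = 0")
      case True then show ?thesis by simp
    next
      case False
      with \<open>?r \<ge> 0\<close> have "?r > 0" by simp
      then show ?thesis using powr_facts(1)[OF \<open>?r > 0\<close>] powr_half_sqrt[of ?r] by simp
    qed
  qed
  then show "psi2 x = 3/2 * (1 - 1/x\<^sup>2)\<^sup>2 * Ipow 4 (-1/2) (1 - 1/x\<^sup>2)"
    by (simp add: psi2_def Ipow_def)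
qed


lemma psi1_deriv: assumes "1 < x"
  shows "(psi1 has_real_derivative (9/2) * Ipow 2 (1/2) (1/x\<^sup>2) / x^3) (at x)"
proof -
  have x2: "x\<^sup>2 > 1" using assms by (simp add: one_less_power)
  then have a: "\<bar>1/x\<^sup>2\<bar> < 1" "1/x\<^sup>2 < 1" by (auto simp: divide_less_eq_1)
  show ?thesis unfolding psi1_eq
    apply (auto intro!: derivative_eq_intros simp: a Ipow2)
    using assms by (simp_all add: field_simps eval_nat_numeral)
qed

lemma psi2_deriv: assumes "1 \<le> x"
  shows "(psi2 has_real_derivative 3 / x^3 * (2 * (1 - 1/x\<^sup>2) * Ipow 4 (-1/2) (1 - 1/x\<^sup>2)
       + (1/2) * (1 - 1/x\<^sup>2)\<^sup>2 * Ipow 6 (-3/2) (1 - 1/x\<^sup>2))) (at x)"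
proof -
  have x2: "x\<^sup>2 \<ge> 1" using assms by (simp add: one_le_power)
  then have "1/x\<^sup>2 \<le> 1" "0 < 1/x\<^sup>2" by (auto simp: divide_le_eq_1)
  then have a: "\<bar>1 - 1/x\<^sup>2\<bar> < 1" by auto
  show ?thesis unfolding psi2_eq
    apply (auto intro!: derivative_eq_intros simp: a Ipow2)
    using assms by (simp_all add: field_simps eval_nat_numeral)
qed


lemma sin_red: "((\<lambda>u. (real k + 1) * sin u ^ k - (real k + 2) * sin u ^ (k+2)) has_integral 0) {0..pi/2}"
proof -
  define g where "g u = sin u ^ (k+1) * cos u" for u :: real
  have hd: "(g has_real_derivative ((real k + 1) * sin u ^ k - (real k + 2) * sin u ^ (k+2))) (at u)" for u
  proof -
    have p: "((\<lambda>u. sin u ^ (k+1)) has_real_derivative (real (k+1) * sin u ^ k * cos u)) (at u)"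
      using DERIV_chain2[OF DERIV_pow DERIV_sin, of "k+1" u] by simp
    have "(g has_real_derivative (real (k+1) * sin u ^ k * cos u * cos u + (- sin u) * sin u ^ (k+1))) (at u)"
      unfolding g_def by (rule DERIV_mult[OF p DERIV_cos])
    moreover have "real (k+1) * sin u ^ k * cos u * cos u + (- sin u) * sin u ^ (k+1)
       = (real k + 1) * sin u ^ k - (real k + 2) * sin u ^ (k+2)"
    proof -
      have "cos u * cos u = 1 - sin u * sin u" using sin_cos_squared_add[of u] by (simp add: power2_eq_square)
      moreover have e: "sin u ^ (k+1) = sin u * sin u ^ k" "sin u ^ (k+2) = sin u * sin u * sin u ^ k" by simp_all
      moreover have "\<And>K S c s :: real. c * c = 1 - s * s \<Longrightarrow> (K+1) * S * c * c + (- s) * (s * S) = (K+1) * S - (K+2) * (s * s * S)"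
        by algebra
      ultimately show ?thesis unfolding e of_nat_add of_nat_1 by blast
    qed
    ultimately show ?thesis by (rule DERIV_cong)
  qed
  have "((\<lambda>u. (real k + 1) * sin u ^ k - (real k + 2) * sin u ^ (k+2)) has_integral (g (pi/2) - g 0)) {0..pi/2}"
    by (rule fundamental_theorem_of_calculus) (simp, rule has_real_derivative_iff_has_vector_derivative[THEN iffD1, OF has_field_derivative_at_within[OF hd]])
  then show ?thesis by (simp add: g_def)
qed

lemma sinpow_int_step: assumes "((\<lambda>u. sin u ^ k) has_integral S) {0..pi/2}"
  shows "((\<lambda>u. sin u ^ (k+2)) has_integral ((real k + 1) / (real k + 2) * S)) {0..pi/2}"
proof -
  have "((\<lambda>u. (real k + 1) * sin u ^ k - ((real k + 1) * sin u ^ k - (real k + 2) * sin u ^ (k+2))) has_integral ((real k + 1) * S - 0)) {0..pi/2}"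
    by (intro has_integral_diff has_integral_mult_right assms sin_red)
  then have "((\<lambda>u. (real k + 2) * sin u ^ (k+2)) has_integral ((real k + 1) * S)) {0..pi/2}" by simp
  then have "((\<lambda>u. inverse (real k + 2) * ((real k + 2) * sin u ^ (k+2))) has_integral (inverse (real k + 2) * ((real k + 1) * S))) {0..pi/2}"
    by (rule has_integral_mult_right)
  moreover have "(\<lambda>u. inverse (real k + 2) * ((real k + 2) * sin u ^ (k+2))) = (\<lambda>u. sin u ^ (k+2))"
    by (rule ext) simp
  moreover have "inverse (real k + 2) * ((real k + 1) * S) = (real k + 1) / (real k + 2) * S"
    by (simp add: field_simps)
  ultimately show ?thesis by simp
qed

lemma sinpow0: "((\<lambda>u. sin u ^ 0) has_integral (pi/2)) {0..pi/2}"
  using has_integral_const_real[of "1::real" 0 "pi/2"] by simp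
lemma sinpow2: "((\<lambda>u. sin u ^ 2) has_integral (pi/4)) {0..pi/2}"
  using sinpow_int_step[OF sinpow0] by (simp add: eval_nat_numeral)
lemma sinpow4: "((\<lambda>u. sin u ^ 4) has_integral (3*pi/16)) {0..pi/2}"
  using sinpow_int_step[OF sinpow2] by (simp add: eval_nat_numeral field_simps)
lemma sinpow6: "((\<lambda>u. sin u ^ 6) has_integral (5*pi/32)) {0..pi/2}"
  using sinpow_int_step[OF sinpow4] by (simp add: eval_nat_numeral field_simps)


lemma Ipow_le: assumes "\<bar>m\<bar> < 1"
  and "\<And>u. u \<in> {0..pi/2} \<Longrightarrow> sin u ^ j * (1 - m * (sin u)\<^sup>2) powr a \<le> g u"
  and "(g has_integral G) {0..pi/2}"
  shows "Ipow j a m \<le> G"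
  by (rule has_integral_le[OF Ipow_has_integral[OF assms(1)] assms(3)]) (use assms(2) in auto)

lemma Ipow_ge: assumes "\<bar>m\<bar> < 1"
  and "\<And>u. u \<in> {0..pi/2} \<Longrightarrow> sin u ^ j * (1 - m * (sin u)\<^sup>2) powr a \<ge> g u"
  and "(g has_integral G) {0..pi/2}"
  shows "Ipow j a m \<ge> G"
  by (rule has_integral_le[OF assms(3) Ipow_has_integral[OF assms(1)]]) (use assms(2) in auto)

lemma sin_nonneg_half: "u \<in> {0..pi/2} \<Longrightarrow> 0 \<le> sin u"
  by (rule sin_ge_zero) auto

lemma q_bounds: fixes m u :: real assumes "0 \<le> m" "m < 1"
  shows "1 - m \<le> 1 - m * (sin u)\<^sup>2" "1 - m * (sin u)\<^sup>2 \<le> 1" "0 < 1 - m * (sin u)\<^sup>2"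
proof -
  have s: "(sin u)\<^sup>2 \<le> 1" "0 \<le> (sin u)\<^sup>2" using abs_sin_le_one[of u] by (auto simp: abs_square_le_1)
  show "1 - m \<le> 1 - m * (sin u)\<^sup>2" using mult_left_mono[OF s(1) assms(1)] by simp
  show "1 - m * (sin u)\<^sup>2 \<le> 1" using assms s by simp
  show "0 < 1 - m * (sin u)\<^sup>2" using mult_left_mono[OF s(1) assms(1)] assms by simp
qed

lemma Ipow_nonneg: assumes "\<bar>m\<bar> < 1" shows "0 \<le> Ipow j a m"
  by (rule Ipow_ge[OF assms, where g="\<lambda>u. 0" and G=0]) (auto intro!: mult_nonneg_nonneg zero_le_power sin_nonneg_half)

lemma invsqrt_bound: fixes z :: real assumes "0 \<le> z" "z < 1"
  shows "1 + z/2 \<le> (1 - z) powr (-1/2)"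
proof -
  have q: "0 < 1 - z" using assms by simp
  have "(1 - z) * (1 + z/2)\<^sup>2 \<le> 1"
  proof -
    have "(1 - z) * (1 + z/2)\<^sup>2 = 1 - (3/4) * z\<^sup>2 - z^3/4" by (simp add: power2_eq_square power3_eq_cube field_simps)
    also have "\<dots> \<le> 1"
    proof -
      have "0 \<le> z\<^sup>2" "0 \<le> z^3" using assms by simp_all
      then show ?thesis by linarith
    qed
    finally show ?thesis .
  qed
  then have "sqrt ((1 - z) * (1 + z/2)\<^sup>2) \<le> 1" by simp
  then have "sqrt (1 - z) * (1 + z/2) \<le> 1" using assms by (simp add: real_sqrt_mult)
  moreover have "sqrt (1 - z) > 0" using q by simp
  ultimately have "1 + z/2 \<le> 1 / sqrt (1 - z)" by (simp add: field_simps)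
  then show ?thesis using powr_facts(1)[OF q] powr_half_sqrt[of "1-z"] q by simp
qed

lemma B0_lower: assumes "0 \<le> n" "n < 1"
  shows "3*pi/16 + n * (5*pi/64) \<le> Ipow 4 (-1/2) n"
proof -
  have "((\<lambda>u. sin u ^ 4 + (n/2) * sin u ^ 6) has_integral (3*pi/16 + (n/2) * (5*pi/32))) {0..pi/2}"
    by (intro has_integral_add has_integral_mult_right sinpow4 sinpow6)
  moreover have "3*pi/16 + (n/2) * (5*pi/32) = 3*pi/16 + n * (5*pi/64)" by simp
  moreover have "sin u ^ 4 + (n/2) * sin u ^ 6 \<le> sin u ^ 4 * (1 - n * (sin u)\<^sup>2) powr (-1/2)" for u
  proof -
    have s: "(sin u)\<^sup>2 \<le> 1" "0 \<le> (sin u)\<^sup>2" using abs_sin_le_one[of u] by (auto simp: abs_square_le_1)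
    have z: "0 \<le> n * (sin u)\<^sup>2" "n * (sin u)\<^sup>2 < 1" using q_bounds[OF assms, of u] s assms by auto
    have "sin u ^ 4 * (1 + n * (sin u)\<^sup>2 / 2) \<le> sin u ^ 4 * (1 - n * (sin u)\<^sup>2) powr (-1/2)"
      by (rule mult_left_mono[OF invsqrt_bound[OF z]]) simp
    then show ?thesis by (simp add: algebra_simps eval_nat_numeral)
  qed
  ultimately show ?thesis using assms by (intro Ipow_ge) auto
qed


lemma B0_upper: assumes "0 \<le> n" "n < 1"
  shows "Ipow 4 (-1/2) n \<le> (3*pi/16) * (1 - n) powr (-1/2)"
proof -
  have "((\<lambda>u. (1 - n) powr (-1/2) * sin u ^ 4) has_integral ((1 - n) powr (-1/2) * (3*pi/16))) {0..pi/2}"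
    by (intro has_integral_mult_right sinpow4)
  moreover have "sin u ^ 4 * (1 - n * (sin u)\<^sup>2) powr (-1/2) \<le> (1 - n) powr (-1/2) * sin u ^ 4" for u
  proof -
    have "(1 - n * (sin u)\<^sup>2) powr (-1/2) \<le> (1 - n) powr (-1/2)"
      by (rule powr_mono2') (use q_bounds[OF assms, of u] assms in auto)
    then show ?thesis by (simp add: mult_left_mono mult.commute)
  qed
  ultimately show ?thesis using assms by (intro Ipow_le) (auto simp: mult.commute)
qed

lemma A1_upper: assumes "0 \<le> m" "m < 1"
  shows "Ipow 2 (1/2) m \<le> pi/4"
proof -
  have "sin u ^ 2 * (1 - m * (sin u)\<^sup>2) powr (1/2) \<le> sin u ^ 2" for u
  proof -
    have "(1 - m * (sin u)\<^sup>2) powr (1/2) \<le> 1"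
      by (rule powr_le1) (use q_bounds[OF assms, of u] in auto)
    then show ?thesis by (simp add: mult_left_le)
  qed
  then show ?thesis using assms by (intro Ipow_le[OF _ _ sinpow2]) auto
qed

lemma A_lower: assumes "0 \<le> m" "m < 1"
  shows "pi/2 - m * (pi/2) + m\<^sup>2 * (3*pi/16) \<le> Ipow 0 (3/2) m"
proof -
  have I: "((\<lambda>u. sin u ^ 0 - 2 * m * sin u ^ 2 + m\<^sup>2 * sin u ^ 4) has_integral (pi/2 - 2 * m * (pi/4) + m\<^sup>2 * (3*pi/16))) {0..pi/2}"
    by (intro has_integral_add has_integral_diff has_integral_mult_right sinpow0 sinpow2 sinpow4)
  have P: "sin u ^ 0 - 2 * m * sin u ^ 2 + m\<^sup>2 * sin u ^ 4 \<le> sin u ^ 0 * (1 - m * (sin u)\<^sup>2) powr (3/2)" for u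
  proof -
    note q = q_bounds[OF assms, of u]
    have "(1 - m * (sin u)\<^sup>2) powr 2 \<le> (1 - m * (sin u)\<^sup>2) powr (3/2)"
      by (rule powr_mono') (use q in auto)
    moreover have "(1 - m * (sin u)\<^sup>2) powr 2 = (1 - m * (sin u)\<^sup>2)\<^sup>2"
      using q by (simp add: powr_numeral)
    moreover have "(1 - m * (sin u)\<^sup>2)\<^sup>2 = sin u ^ 0 - 2 * m * sin u ^ 2 + m\<^sup>2 * sin u ^ 4"
      by (simp add: power2_eq_square algebra_simps eval_nat_numeral)
    ultimately show ?thesis by simp
  qed
  have "pi/2 - 2 * m * (pi/4) + m\<^sup>2 * (3*pi/16) \<le> Ipow 0 (3/2) m"
    by (rule Ipow_ge[OF _ P I]) (use assms in auto)
  then show ?thesis by (simp add: mult.commute)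
qed

lemma A_upper: assumes "0 \<le> m" "m < 1"
  shows "Ipow 0 (3/2) m \<le> pi/2 - m * (pi/4)"
proof -
  have "((\<lambda>u. sin u ^ 0 - m * sin u ^ 2) has_integral (pi/2 - m * (pi/4))) {0..pi/2}"
    by (intro has_integral_diff has_integral_mult_right sinpow0 sinpow2)
  moreover have "sin u ^ 0 * (1 - m * (sin u)\<^sup>2) powr (3/2) \<le> sin u ^ 0 - m * sin u ^ 2" for u
  proof -
    note q = q_bounds[OF assms, of u]
    have "(1 - m * (sin u)\<^sup>2) powr (3/2) \<le> (1 - m * (sin u)\<^sup>2) powr 1"
      by (rule powr_mono') (use q in auto)
    then show ?thesis using q by simp
  qed
  ultimately show ?thesis using assms by (intro Ipow_le) auto
qed


lemma omega_1: "omega 1 = 0"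
proof -
  have "vector_derivative psi2 (at 1 within {1..}) = 0"
    using vd_within[OF psi2_deriv[of 1]] by simp
  moreover have "psi2 1 = 0" by (simp add: psi2_def)
  ultimately show ?thesis by (simp add: omega_def)
qed

lemma omega_eq: assumes "1 < x"
  shows "omega x = 9 / (2 * x^3) * V (1/x\<^sup>2)"
proof -
  have "omega x = 3 / x^3 * (2 * (1 - 1/x\<^sup>2) * Ipow 4 (-1/2) (1 - 1/x\<^sup>2)
       + (1/2) * (1 - 1/x\<^sup>2)\<^sup>2 * Ipow 6 (-3/2) (1 - 1/x\<^sup>2)) * psi1 x
       - psi2 x * ((9/2) * Ipow 2 (1/2) (1/x\<^sup>2) / x^3)"
    unfolding omega_def
    using vd_within[OF psi1_deriv[OF assms]] vd_within[OF psi2_deriv] assms by simp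
  also have "\<dots> = 9 / (2 * x^3) * V (1/x\<^sup>2)"
  proof -
    have alg: "X \<noteq> 0 \<Longrightarrow> 3 / X * (2 * n * B0 + (1/2) * n\<^sup>2 * B1) * (3/2 * A) - 3/2 * n\<^sup>2 * B0 * ((9/2) * A1 / X)
       = 9 / (2 * X) * ((2 * n * B0 + (1/2) * n\<^sup>2 * B1) * A - (3/2) * n\<^sup>2 * B0 * A1)" for X n A A1 B0 B1 :: real
      by (simp add: field_simps)
    show ?thesis unfolding V_def psi1_eq psi2_eq by (rule alg) (use assms in simp)
  qed
  finally show ?thesis .
qed

lemma K_bound: "2/3 \<le> V (999/1000) * (999/1000) / (1 - 999/1000)"
proof -
  define m :: real where "m = 999/1000"
  define n :: real where "n = 1/1000"
  have nm: "1 - m = n" by (simp add: m_def n_def)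
  define A where "A = Ipow 0 (3/2) m"
  define A1 where "A1 = Ipow 2 (1/2) m"
  define B0 where "B0 = Ipow 4 (-1/2) n"
  define B1 where "B1 = Ipow 6 (-3/2) n"
  have m: "0 \<le> m" "m < 1" "\<bar>m\<bar> < 1" by (auto simp: m_def)
  have n: "0 \<le> n" "n < 1" "\<bar>n\<bar> < 1" "0 < n" by (auto simp: n_def)
  have hA1: "0 \<le> A1" "A1 \<le> pi/4" using Ipow_nonneg[OF m(3)] A1_upper[OF m(1,2)] by (auto simp: A1_def)
  have "0 \<le> n * (5*pi/64)" using n by simp
  then have hB0: "3*pi/16 \<le> B0" using B0_lower[OF n(1,2)] unfolding B0_def by linarith
  have hB1: "0 \<le> B1" using Ipow_nonneg[OF n(3)] by (simp add: B1_def)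
  have hA: "pi/2 - m * (pi/2) + m\<^sup>2 * (3*pi/16) \<le> A" using A_lower[OF m(1,2)] by (simp add: A_def)
  have hA0: "0 \<le> A" using Ipow_nonneg[OF m(3)] by (simp add: A_def)
  have V: "V m = (2 * n * B0 + (1/2) * n\<^sup>2 * B1) * A - (3/2) * n\<^sup>2 * B0 * A1"
    unfolding V_def nm A_def A1_def B0_def B1_def ..
  have "V m - n * B0 * (2 * A - (3/8) * n * pi) = (1/2) * n\<^sup>2 * B1 * A + (3/2) * n\<^sup>2 * B0 * (pi/4 - A1)"
    unfolding V by (simp add: field_simps power2_eq_square)
  also have "\<dots> \<ge> 0" using hB1 hA0 hA1 hB0 pi_gt3 by (intro add_nonneg_nonneg mult_nonneg_nonneg) auto
  finally have V1: "V m \<ge> n * B0 * (2 * A - (3/8) * n * pi)" by simp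
  have "V m * m / n \<ge> (n * B0 * (2 * A - (3/8) * n * pi)) * m / n"
    by (intro divide_right_mono mult_right_mono V1) (use m n in auto)
  also have "(n * B0 * (2 * A - (3/8) * n * pi)) * m / n = m * (B0 * (2 * A - (3/8) * n * pi))"
    using n by simp
  finally have K1: "V m * m / (1 - m) \<ge> m * (B0 * (2 * A - (3/8) * n * pi))" by (simp add: nm)
  have p: "3.14 \<le> pi" "pi \<le> 3.15" using pi_approx by auto
  define Y' where "Y' = 2 * (pi/2 - m * (pi/2) + m\<^sup>2 * (3*pi/16)) - (3/8) * n * pi"
  have Y'e: "Y' = pi * (2 * (1/2 - m/2 + m\<^sup>2 * (3/16)) - (3/8) * n)"
    unfolding Y'_def by (simp add: algebra_simps)
  have cpos: "0 \<le> 2 * (1/2 - m/2 + m\<^sup>2 * (3/16)) - (3/8) * n" by (simp add: m_def n_def)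
  have Y'0: "0 \<le> Y'" unfolding Y'e using cpos by simp
  have gen: "2 * X - c \<le> 2 * A - c" if "X \<le> A" for X c :: real using that by simp
  have "Y' \<le> 2 * A - (3/8) * n * pi" unfolding Y'_def by (rule gen[OF hA])
  then have "(3*pi/16) * Y' \<le> B0 * (2 * A - (3/8) * n * pi)"
    by (rule mult_mono[OF hB0]) (use Y'0 hB0 pi_gt3 in auto)
  then have "m * ((3*pi/16) * Y') \<le> m * (B0 * (2 * A - (3/8) * n * pi))"
    by (rule mult_left_mono) (use m in auto)
  moreover have "m * ((3*pi/16) * Y') \<ge> 2/3"
  proof -
    have "m * ((3*pi/16) * Y') = (pi * pi) * (m * (3/16) * (2 * (1/2 - m/2 + m\<^sup>2 * (3/16)) - (3/8) * n))"
      unfolding Y'e by (simp add: algebra_simps)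
    moreover have "(3.14 * 3.14) * (m * (3/16) * (2 * (1/2 - m/2 + m\<^sup>2 * (3/16)) - (3/8) * n)) \<le>
           (pi * pi) * (m * (3/16) * (2 * (1/2 - m/2 + m\<^sup>2 * (3/16)) - (3/8) * n))"
      by (intro mult_right_mono mult_mono p(1)) (use cpos m in auto)
    moreover have "2/3 \<le> (3.14 * 3.14) * (m * (3/16) * (2 * (1/2 - m/2 + m\<^sup>2 * (3/16)) - (3/8) * n))"
      by (simp add: m_def n_def power2_eq_square)
    ultimately show ?thesis by linarith
  qed
  ultimately show ?thesis using K1 unfolding m_def by linarith
qed


lemma piece_core: fixes p1 p2 a b g d e C X Y :: real
  assumes "0 \<le> p1" "p1 \<le> g * pi" "a * pi \<le> p2" "p2 \<le> b * pi" "0 < a" "0 \<le> g" "0 \<le> b"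
    "0 \<le> X" "X \<le> e" "d \<le> Y" "0 \<le> d" "3 \<le> C"
    "pi\<^sup>2 * (e * g * (a * b + g\<^sup>2)) \<le> 21 * a * d"
  shows "X * (p1\<^sup>2 + p2\<^sup>2) * p1 \<le> 7 * C * Y * p2"
proof -
  have pi0: "0 < pi" by simp
  have "0 < a * pi" using assms(5) pi0 by (rule mult_pos_pos)
  then have p2: "0 \<le> p2" using assms(3) by linarith
  have e0: "0 \<le> e" using assms by linarith
  have q1: "p1\<^sup>2 \<le> (g * pi)\<^sup>2" using assms(1,2) by (simp add: power_mono)
  have q2: "p2\<^sup>2 \<le> p2 * (b * pi)" using assms(4) p2 by (simp add: power2_eq_square mult_left_mono)
  have s1a: "p1\<^sup>2 + p2\<^sup>2 \<le> (g * pi)\<^sup>2 + p2 * (b * pi)" using q1 q2 by linarith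
  have s1: "X * (p1\<^sup>2 + p2\<^sup>2) * p1 \<le> e * ((g * pi)\<^sup>2 + p2 * (b * pi)) * (g * pi)"
    by (intro mult_mono s1a assms) (use assms p2 e0 in auto)
  define T where "T = 21 * d - pi\<^sup>2 * e * g * b"
  have aT: "a * T \<ge> pi\<^sup>2 * e * g^3"
    using assms(13) unfolding T_def by (simp add: algebra_simps power2_eq_square power3_eq_cube)
  have g3: "0 \<le> pi\<^sup>2 * e * g^3" using e0 assms(6) by simp
  have T0: "0 \<le> T"
  proof (rule ccontr)
    assume "\<not> 0 \<le> T"
    then have "a * T < 0" using assms(5) by (simp add: mult_pos_neg)
    with aT g3 show False by linarith
  qed
  have "p2 * T \<ge> (a * pi) * T" by (rule mult_right_mono[OF assms(3) T0])
  moreover have "(a * pi) * T = pi * (a * T)" by simp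
  moreover have "pi * (a * T) \<ge> pi * (pi\<^sup>2 * e * g^3)" by (rule mult_left_mono[OF aT]) simp
  ultimately have pT: "p2 * T \<ge> pi * (pi\<^sup>2 * e * g^3)" by linarith
  have s3: "e * ((g * pi)\<^sup>2 + p2 * (b * pi)) * (g * pi) \<le> 21 * d * p2"
  proof -
    have "e * ((g * pi)\<^sup>2 + p2 * (b * pi)) * (g * pi) = pi * (pi\<^sup>2 * e * g^3) + p2 * (pi\<^sup>2 * e * g * b)"
      by (simp add: algebra_simps power2_eq_square power3_eq_cube)
    also have "21 * d * p2 = p2 * T + p2 * (pi\<^sup>2 * e * g * b)" unfolding T_def by (simp add: algebra_simps)
    ultimately show ?thesis using pT by linarith
  qed
  have s2: "21 * d * p2 \<le> 7 * C * Y * p2"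
  proof -
    have "3 * d \<le> C * Y" by (rule mult_mono) (use assms in auto)
    then have "21 * d \<le> 7 * C * Y" by linarith
    then show ?thesis using p2 by (simp add: mult_right_mono)
  qed
  show ?thesis using s1 s3 s2 by linarith
qed

lemma inv_sq_mono: fixes u v :: real assumes "0 < u" "u \<le> v" shows "1/v\<^sup>2 \<le> 1/u\<^sup>2"
  using assms by (simp add: frac_le power_mono)

lemma piece: fixes x x0 x1 p1 p2 C :: real
  assumes "x0 \<le> x" "x \<le> x1" "1 < x0" "3 \<le> x\<^sup>2" "3 \<le> C" "0 \<le> p1"
    "p1 \<le> (3*pi/4) * (1 - 1/(2*x\<^sup>2))"
    "(3/2) * (1 - 1/x\<^sup>2)\<^sup>2 * (3*pi/16 + (1 - 1/x\<^sup>2) * (5*pi/64)) \<le> p2"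
    "p2 \<le> (3/2) * (1 - 1/x\<^sup>2)\<^sup>2 * (3*pi/16) * x"
    "(31416/10000)\<^sup>2 * ((x1\<^sup>2 - 3) * ((3/4) * (1 - 1/(2*x1\<^sup>2)))
        * ((3/2) * (1 - 1/x0\<^sup>2)\<^sup>2 * (3/16 + (1 - 1/x0\<^sup>2) * (5/64)) * ((3/2) * (1 - 1/x1\<^sup>2)\<^sup>2 * (3/16) * x1)
           + ((3/4) * (1 - 1/(2*x1\<^sup>2)))\<^sup>2))
     \<le> 21 * ((3/2) * (1 - 1/x0\<^sup>2)\<^sup>2 * (3/16 + (1 - 1/x0\<^sup>2) * (5/64))) * (x0 - 1/x0)\<^sup>2"
  shows "(x\<^sup>2 - 3) * (p1\<^sup>2 + p2\<^sup>2) * p1 \<le> 7 * C * ((x\<^sup>2 - 1)\<^sup>2 / x\<^sup>2) * p2"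
proof -
  define n0 where "n0 = 1 - 1/x0\<^sup>2"
  define n1 where "n1 = 1 - 1/x1\<^sup>2"
  define n where "n = 1 - 1/x\<^sup>2"
  have x0: "0 < x0" using assms by simp
  have xp: "0 < x" using assms by simp
  have x1: "0 < x1" using assms by simp
  have "1/x0\<^sup>2 < 1" using assms(3) by (simp add: divide_less_eq_1 one_less_power)
  then have n0p: "0 < n0" by (simp add: n0_def)
  have nn0: "n0 \<le> n" unfolding n0_def n_def using inv_sq_mono[OF x0 assms(1)] by simp
  have nn1: "n \<le> n1" unfolding n1_def n_def using inv_sq_mono[OF xp assms(2)] by simp
  have n1le: "n1 \<le> 1" unfolding n1_def by simp
  define a where "a = (3/2) * n0\<^sup>2 * (3/16 + n0 * (5/64))"
  define b where "b = (3/2) * n1\<^sup>2 * (3/16) * x1"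
  define g where "g = (3/4) * (1 - 1/(2*x1\<^sup>2))"
  have a0: "0 < a" unfolding a_def using n0p by simp
  have b0: "0 \<le> b" unfolding b_def using x1 by simp
  have x1g: "1 < x1" using assms by simp
  have "1/x1\<^sup>2 < 1" using x1g by (simp add: divide_less_eq_1 one_less_power)
  then have g0: "0 \<le> g" unfolding g_def by simp
  have "1/x1\<^sup>2 \<le> 1/x\<^sup>2" by (rule inv_sq_mono[OF xp assms(2)])
  then have "(3*pi/8) * (1/x1\<^sup>2) \<le> (3*pi/8) * (1/x\<^sup>2)" by (rule mult_left_mono) simp
  moreover have "(3*pi/4) * (1 - 1/(2*x\<^sup>2)) = 3*pi/4 - (3*pi/8) * (1/x\<^sup>2)" by (simp add: field_simps)
  moreover have "g * pi = 3*pi/4 - (3*pi/8) * (1/x1\<^sup>2)" by (simp add: g_def field_simps)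
  ultimately have "(3*pi/4) * (1 - 1/(2*x\<^sup>2)) \<le> g * pi" by linarith
  then have hp1: "p1 \<le> g * pi" using assms(7) by linarith
  have "a * pi = (3/2) * n0\<^sup>2 * (3/16 + n0 * (5/64)) * pi" by (simp add: a_def)
  also have "\<dots> \<le> (3/2) * n\<^sup>2 * (3/16 + n * (5/64)) * pi"
  proof -
    have "n0\<^sup>2 \<le> n\<^sup>2" using power_mono[OF nn0, of 2] n0p by simp
    moreover have "3/16 + n0 * (5/64) \<le> 3/16 + n * (5/64)" using nn0 by simp
    ultimately have "n0\<^sup>2 * (3/16 + n0 * (5/64)) \<le> n\<^sup>2 * (3/16 + n * (5/64))"
      by (rule mult_mono) (use n0p in auto)
    then show ?thesis by simp
  qed
  also have "\<dots> = (3/2) * (1 - 1/x\<^sup>2)\<^sup>2 * (3*pi/16 + (1 - 1/x\<^sup>2) * (5*pi/64))"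
    unfolding n_def by (simp add: algebra_simps)
  finally have hp2a: "a * pi \<le> p2" using assms(8) by linarith
  have "(3/2) * (1 - 1/x\<^sup>2)\<^sup>2 * (3*pi/16) * x = ((3/2) * (3/16) * pi) * (n\<^sup>2 * x)"
    unfolding n_def by (simp add: algebra_simps)
  also have "\<dots> \<le> ((3/2) * (3/16) * pi) * (n1\<^sup>2 * x1)"
  proof -
    have "n\<^sup>2 \<le> n1\<^sup>2" using power_mono[OF nn1, of 2] nn0 n0p by simp
    then have "n\<^sup>2 * x \<le> n1\<^sup>2 * x1" by (rule mult_mono) (use assms xp in auto)
    then show ?thesis by (intro mult_left_mono) auto
  qed
  also have "\<dots> = b * pi" by (simp add: b_def)
  finally have hp2b: "p2 \<le> b * pi" using assms(9) by linarith
  have hd: "(x0 - 1/x0)\<^sup>2 \<le> (x\<^sup>2 - 1)\<^sup>2 / x\<^sup>2"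
  proof -
    have "1/x \<le> 1/x0" using x0 assms(1) by (simp add: frac_le)
    then have le: "x0 - 1/x0 \<le> x - 1/x" using assms(1) by linarith
    have "1/x0 < 1" using assms(3) by simp
    then have "0 \<le> x0 - 1/x0" using assms(3) by linarith
    then have "(x0 - 1/x0)\<^sup>2 \<le> (x - 1/x)\<^sup>2" by (rule power_mono[OF le])
    also have "(x - 1/x)\<^sup>2 = (x\<^sup>2 - 1)\<^sup>2 / x\<^sup>2" using xp by (simp add: field_simps power2_eq_square)
    finally show ?thesis .
  qed
  have hpi: "pi\<^sup>2 \<le> (31416/10000)\<^sup>2" using pi_approx by (intro power_mono) auto
  have "x\<^sup>2 \<le> x1\<^sup>2" using power_mono[OF assms(2), of 2] xp by simp
  then have "0 \<le> x1\<^sup>2 - 3" using assms(4) by simp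
  then have he: "0 \<le> (x1\<^sup>2 - 3) * g * (a * b + g\<^sup>2)" using g0 a0 b0 by simp
  have num: "pi\<^sup>2 * ((x1\<^sup>2 - 3) * g * (a * b + g\<^sup>2)) \<le> 21 * a * (x0 - 1/x0)\<^sup>2"
  proof -
    have "pi\<^sup>2 * ((x1\<^sup>2 - 3) * g * (a * b + g\<^sup>2)) \<le> (31416/10000)\<^sup>2 * ((x1\<^sup>2 - 3) * g * (a * b + g\<^sup>2))"
      by (rule mult_right_mono[OF hpi he])
    also have "\<dots> \<le> 21 * a * (x0 - 1/x0)\<^sup>2" using assms(10) unfolding a_def b_def g_def n0_def n1_def
      by (simp add: mult.assoc)
    finally show ?thesis .
  qed
  have hX: "0 \<le> x\<^sup>2 - 3" using assms(4) by simp
  have hXe: "x\<^sup>2 - 3 \<le> x1\<^sup>2 - 3" using power_mono[OF assms(2), of 2] xp by simp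
  show ?thesis
    by (rule piece_core[OF assms(6) hp1 hp2a hp2b a0 g0 b0 hX hXe hd _ assms(5) num]) simp
qed


lemma omega_closed: "\<exists>C\<ge>3. \<forall>x>1. omega x = C * (x\<^sup>2 - 1) / x^3"
proof -
  obtain K where K: "\<forall>m\<in>{0<..<1}. V m * m / (1 - m) = K" using V_const by blast
  have "(999/1000::real) \<in> {0<..<1}" by simp
  with K have "V (999/1000) * (999/1000) / (1 - 999/1000) = K" by blast
  then have K3: "2/3 \<le> K" using K_bound by linarith
  have "omega x = (9/2 * K) * (x\<^sup>2 - 1) / x^3" if x: "1 < x" for x
  proof -
    have x2: "1 < x\<^sup>2" using x by (simp add: one_less_power)
    then have m: "1/x\<^sup>2 \<in> {0<..<1}" by (auto simp: divide_less_eq_1)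
    then have "V (1/x\<^sup>2) * (1/x\<^sup>2) / (1 - 1/x\<^sup>2) = K" using K by blast
    moreover have "1 - 1/x\<^sup>2 \<noteq> 0" using m by auto
    ultimately have "K + V (1/x\<^sup>2) = K * x\<^sup>2" using x by (simp add: field_simps)
    then have "V (1/x\<^sup>2) = K * (x\<^sup>2 - 1)" by (simp add: algebra_simps)
    then show ?thesis using omega_eq[OF x] by simp
  qed
  moreover have "3 \<le> 9/2 * K" using K3 by simp
  ultimately show ?thesis by blast
qed

lemma psi1_bounds: assumes "1 < x"
  shows "0 < psi1 x" "psi1 x \<le> (3*pi/4) * (1 - 1/(2*x\<^sup>2))"
proof -
  have x2: "1 < x\<^sup>2" using assms by (simp add: one_less_power)
  then have m: "0 \<le> 1/x\<^sup>2" "1/x\<^sup>2 < 1" by (auto simp: divide_less_eq_1)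
  have "0 < pi/2 - (1/x\<^sup>2) * (pi/2) + (1/x\<^sup>2)\<^sup>2 * (3*pi/16)"
  proof -
    have "0 < (1 - 1/x\<^sup>2) * (pi/2)" using m by simp
    moreover have "0 \<le> (1/x\<^sup>2)\<^sup>2 * (3*pi/16)" by simp
    moreover have "pi/2 - (1/x\<^sup>2) * (pi/2) + (1/x\<^sup>2)\<^sup>2 * (3*pi/16) = (1 - 1/x\<^sup>2) * (pi/2) + (1/x\<^sup>2)\<^sup>2 * (3*pi/16)"
      by (simp add: algebra_simps)
    ultimately show ?thesis by linarith
  qed
  then show "0 < psi1 x" using A_lower[OF m] unfolding psi1_eq by simp
  show "psi1 x \<le> (3*pi/4) * (1 - 1/(2*x\<^sup>2))" using A_upper[OF m] unfolding psi1_eq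
    by (simp add: field_simps)
qed

lemma psi1_deriv_nonneg: assumes "1 < x" shows "0 \<le> (9/2) * Ipow 2 (1/2) (1/x\<^sup>2) / x^3"
proof -
  have x2: "1 < x\<^sup>2" using assms by (simp add: one_less_power)
  then have "\<bar>1/x\<^sup>2\<bar> < 1" by (auto simp: divide_less_eq_1)
  then show ?thesis using Ipow_nonneg assms by simp
qed

lemma psi2_bounds: assumes "1 < x"
  shows "(3/2) * (1 - 1/x\<^sup>2)\<^sup>2 * (3*pi/16 + (1 - 1/x\<^sup>2) * (5*pi/64)) \<le> psi2 x"
        "psi2 x \<le> (3/2) * (1 - 1/x\<^sup>2)\<^sup>2 * (3*pi/16) * x"
proof -
  have x2: "1 < x\<^sup>2" using assms by (simp add: one_less_power)
  then have "0 < 1/x\<^sup>2" "1/x\<^sup>2 < 1" by (auto simp: divide_less_eq_1)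
  then have n: "0 \<le> 1 - 1/x\<^sup>2" "1 - 1/x\<^sup>2 < 1" by linarith+
  show "(3/2) * (1 - 1/x\<^sup>2)\<^sup>2 * (3*pi/16 + (1 - 1/x\<^sup>2) * (5*pi/64)) \<le> psi2 x"
    unfolding psi2_eq using B0_lower[OF n] by (intro mult_left_mono) auto
  have "(1 - (1 - 1/x\<^sup>2)) powr (-1/2) = x"
  proof -
    have "(1/x\<^sup>2) powr (1/2) = 1/x" using assms by (simp add: powr_half_sqrt real_sqrt_divide)
    moreover have "(1/x\<^sup>2) powr (-1/2) = 1 / (1/x\<^sup>2) powr (1/2)"
      using powr_facts(1)[of "1/x\<^sup>2"] assms by simp
    ultimately show ?thesis by simp
  qed
  then have "Ipow 4 (-1/2) (1 - 1/x\<^sup>2) \<le> (3*pi/16) * x" using B0_upper[OF n] by simp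
  then have "(3/2) * (1 - 1/x\<^sup>2)\<^sup>2 * Ipow 4 (-1/2) (1 - 1/x\<^sup>2) \<le> (3/2) * (1 - 1/x\<^sup>2)\<^sup>2 * ((3*pi/16) * x)"
    by (rule mult_left_mono) simp
  then show "psi2 x \<le> (3/2) * (1 - 1/x\<^sup>2)\<^sup>2 * (3*pi/16) * x"
    unfolding psi2_eq by (simp add: mult.assoc)
qed


lemma num0: "(31416/10000)\<^sup>2 * (((208/100::real)\<^sup>2 - 3) * ((3/4) * (1 - 1/(2*(208/100::real)\<^sup>2)))
        * ((3/2) * (1 - 1/(173/100::real)\<^sup>2)\<^sup>2 * (3/16 + (1 - 1/(173/100::real)\<^sup>2) * (5/64)) * ((3/2) * (1 - 1/(208/100::real)\<^sup>2)\<^sup>2 * (3/16) * (208/100::real))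
           + ((3/4) * (1 - 1/(2*(208/100::real)\<^sup>2)))\<^sup>2))
     \<le> 21 * ((3/2) * (1 - 1/(173/100::real)\<^sup>2)\<^sup>2 * (3/16 + (1 - 1/(173/100::real)\<^sup>2) * (5/64))) * ((173/100::real) - 1/(173/100::real))\<^sup>2"
  by (simp add: power2_eq_square)
lemma num1: "(31416/10000)\<^sup>2 * (((245/100::real)\<^sup>2 - 3) * ((3/4) * (1 - 1/(2*(245/100::real)\<^sup>2)))
        * ((3/2) * (1 - 1/(208/100::real)\<^sup>2)\<^sup>2 * (3/16 + (1 - 1/(208/100::real)\<^sup>2) * (5/64)) * ((3/2) * (1 - 1/(245/100::real)\<^sup>2)\<^sup>2 * (3/16) * (245/100::real))
           + ((3/4) * (1 - 1/(2*(245/100::real)\<^sup>2)))\<^sup>2))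
     \<le> 21 * ((3/2) * (1 - 1/(208/100::real)\<^sup>2)\<^sup>2 * (3/16 + (1 - 1/(208/100::real)\<^sup>2) * (5/64))) * ((208/100::real) - 1/(208/100::real))\<^sup>2"
  by (simp add: power2_eq_square)
lemma num2: "(31416/10000)\<^sup>2 * (((283/100::real)\<^sup>2 - 3) * ((3/4) * (1 - 1/(2*(283/100::real)\<^sup>2)))
        * ((3/2) * (1 - 1/(245/100::real)\<^sup>2)\<^sup>2 * (3/16 + (1 - 1/(245/100::real)\<^sup>2) * (5/64)) * ((3/2) * (1 - 1/(283/100::real)\<^sup>2)\<^sup>2 * (3/16) * (283/100::real))
           + ((3/4) * (1 - 1/(2*(283/100::real)\<^sup>2)))\<^sup>2))
     \<le> 21 * ((3/2) * (1 - 1/(245/100::real)\<^sup>2)\<^sup>2 * (3/16 + (1 - 1/(245/100::real)\<^sup>2) * (5/64))) * ((245/100::real) - 1/(245/100::real))\<^sup>2"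
  by (simp add: power2_eq_square)
lemma num3: "(31416/10000)\<^sup>2 * (((322/100::real)\<^sup>2 - 3) * ((3/4) * (1 - 1/(2*(322/100::real)\<^sup>2)))
        * ((3/2) * (1 - 1/(283/100::real)\<^sup>2)\<^sup>2 * (3/16 + (1 - 1/(283/100::real)\<^sup>2) * (5/64)) * ((3/2) * (1 - 1/(322/100::real)\<^sup>2)\<^sup>2 * (3/16) * (322/100::real))
           + ((3/4) * (1 - 1/(2*(322/100::real)\<^sup>2)))\<^sup>2))
     \<le> 21 * ((3/2) * (1 - 1/(283/100::real)\<^sup>2)\<^sup>2 * (3/16 + (1 - 1/(283/100::real)\<^sup>2) * (5/64))) * ((283/100::real) - 1/(283/100::real))\<^sup>2"
  by (simp add: power2_eq_square)
lemma num4: "(31416/10000)\<^sup>2 * (((36/10::real)\<^sup>2 - 3) * ((3/4) * (1 - 1/(2*(36/10::real)\<^sup>2)))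
        * ((3/2) * (1 - 1/(322/100::real)\<^sup>2)\<^sup>2 * (3/16 + (1 - 1/(322/100::real)\<^sup>2) * (5/64)) * ((3/2) * (1 - 1/(36/10::real)\<^sup>2)\<^sup>2 * (3/16) * (36/10::real))
           + ((3/4) * (1 - 1/(2*(36/10::real)\<^sup>2)))\<^sup>2))
     \<le> 21 * ((3/2) * (1 - 1/(322/100::real)\<^sup>2)\<^sup>2 * (3/16 + (1 - 1/(322/100::real)\<^sup>2) * (5/64))) * ((322/100::real) - 1/(322/100::real))\<^sup>2"
  by (simp add: power2_eq_square)
lemma num5: "(31416/10000)\<^sup>2 * (((395/100::real)\<^sup>2 - 3) * ((3/4) * (1 - 1/(2*(395/100::real)\<^sup>2)))
        * ((3/2) * (1 - 1/(36/10::real)\<^sup>2)\<^sup>2 * (3/16 + (1 - 1/(36/10::real)\<^sup>2) * (5/64)) * ((3/2) * (1 - 1/(395/100::real)\<^sup>2)\<^sup>2 * (3/16) * (395/100::real))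
           + ((3/4) * (1 - 1/(2*(395/100::real)\<^sup>2)))\<^sup>2))
     \<le> 21 * ((3/2) * (1 - 1/(36/10::real)\<^sup>2)\<^sup>2 * (3/16 + (1 - 1/(36/10::real)\<^sup>2) * (5/64))) * ((36/10::real) - 1/(36/10::real))\<^sup>2"
  by (simp add: power2_eq_square)
lemma num6: "(31416/10000)\<^sup>2 * (((426/100::real)\<^sup>2 - 3) * ((3/4) * (1 - 1/(2*(426/100::real)\<^sup>2)))
        * ((3/2) * (1 - 1/(395/100::real)\<^sup>2)\<^sup>2 * (3/16 + (1 - 1/(395/100::real)\<^sup>2) * (5/64)) * ((3/2) * (1 - 1/(426/100::real)\<^sup>2)\<^sup>2 * (3/16) * (426/100::real))
           + ((3/4) * (1 - 1/(2*(426/100::real)\<^sup>2)))\<^sup>2))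
     \<le> 21 * ((3/2) * (1 - 1/(395/100::real)\<^sup>2)\<^sup>2 * (3/16 + (1 - 1/(395/100::real)\<^sup>2) * (5/64))) * ((395/100::real) - 1/(395/100::real))\<^sup>2"
  by (simp add: power2_eq_square)
lemma num7: "(31416/10000)\<^sup>2 * (((453/100::real)\<^sup>2 - 3) * ((3/4) * (1 - 1/(2*(453/100::real)\<^sup>2)))
        * ((3/2) * (1 - 1/(426/100::real)\<^sup>2)\<^sup>2 * (3/16 + (1 - 1/(426/100::real)\<^sup>2) * (5/64)) * ((3/2) * (1 - 1/(453/100::real)\<^sup>2)\<^sup>2 * (3/16) * (453/100::real))
           + ((3/4) * (1 - 1/(2*(453/100::real)\<^sup>2)))\<^sup>2))
     \<le> 21 * ((3/2) * (1 - 1/(426/100::real)\<^sup>2)\<^sup>2 * (3/16 + (1 - 1/(426/100::real)\<^sup>2) * (5/64))) * ((426/100::real) - 1/(426/100::real))\<^sup>2"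
  by (simp add: power2_eq_square)
lemma num8: "(31416/10000)\<^sup>2 * (((476/100::real)\<^sup>2 - 3) * ((3/4) * (1 - 1/(2*(476/100::real)\<^sup>2)))
        * ((3/2) * (1 - 1/(453/100::real)\<^sup>2)\<^sup>2 * (3/16 + (1 - 1/(453/100::real)\<^sup>2) * (5/64)) * ((3/2) * (1 - 1/(476/100::real)\<^sup>2)\<^sup>2 * (3/16) * (476/100::real))
           + ((3/4) * (1 - 1/(2*(476/100::real)\<^sup>2)))\<^sup>2))
     \<le> 21 * ((3/2) * (1 - 1/(453/100::real)\<^sup>2)\<^sup>2 * (3/16 + (1 - 1/(453/100::real)\<^sup>2) * (5/64))) * ((453/100::real) - 1/(453/100::real))\<^sup>2"
  by (simp add: power2_eq_square)
lemma num9: "(31416/10000)\<^sup>2 * (((495/100::real)\<^sup>2 - 3) * ((3/4) * (1 - 1/(2*(495/100::real)\<^sup>2)))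
        * ((3/2) * (1 - 1/(476/100::real)\<^sup>2)\<^sup>2 * (3/16 + (1 - 1/(476/100::real)\<^sup>2) * (5/64)) * ((3/2) * (1 - 1/(495/100::real)\<^sup>2)\<^sup>2 * (3/16) * (495/100::real))
           + ((3/4) * (1 - 1/(2*(495/100::real)\<^sup>2)))\<^sup>2))
     \<le> 21 * ((3/2) * (1 - 1/(476/100::real)\<^sup>2)\<^sup>2 * (3/16 + (1 - 1/(476/100::real)\<^sup>2) * (5/64))) * ((476/100::real) - 1/(476/100::real))\<^sup>2"
  by (simp add: power2_eq_square)
lemma num10: "(31416/10000)\<^sup>2 * (((5::real)\<^sup>2 - 3) * ((3/4) * (1 - 1/(2*(5::real)\<^sup>2)))
        * ((3/2) * (1 - 1/(495/100::real)\<^sup>2)\<^sup>2 * (3/16 + (1 - 1/(495/100::real)\<^sup>2) * (5/64)) * ((3/2) * (1 - 1/(5::real)\<^sup>2)\<^sup>2 * (3/16) * (5::real))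
           + ((3/4) * (1 - 1/(2*(5::real)\<^sup>2)))\<^sup>2))
     \<le> 21 * ((3/2) * (1 - 1/(495/100::real)\<^sup>2)\<^sup>2 * (3/16 + (1 - 1/(495/100::real)\<^sup>2) * (5/64))) * ((495/100::real) - 1/(495/100::real))\<^sup>2"
  by (simp add: power2_eq_square)

lemma all_pieces: fixes x p1 p2 C :: real
  assumes "3 \<le> x\<^sup>2" "x \<le> 5" "0 < x" "3 \<le> C" "0 \<le> p1"
    "p1 \<le> (3*pi/4) * (1 - 1/(2*x\<^sup>2))"
    "(3/2) * (1 - 1/x\<^sup>2)\<^sup>2 * (3*pi/16 + (1 - 1/x\<^sup>2) * (5*pi/64)) \<le> p2"
    "p2 \<le> (3/2) * (1 - 1/x\<^sup>2)\<^sup>2 * (3*pi/16) * x"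
  shows "(x\<^sup>2 - 3) * (p1\<^sup>2 + p2\<^sup>2) * p1 \<le> 7 * C * ((x\<^sup>2 - 1)\<^sup>2 / x\<^sup>2) * p2"
proof -
  have lo: "173/100 \<le> x"
  proof (rule ccontr)
    assume "\<not> 173/100 \<le> x"
    then have "x\<^sup>2 < (173/100)\<^sup>2" using assms(3) by (intro power_strict_mono) auto
    then show False using assms(1) by (simp add: power2_eq_square)
  qed
  have h0: "?thesis" if "173/100 \<le> x" "x \<le> 208/100"
    by (rule piece[OF that(1) that(2) _ assms(1,4,5,6,7,8) num0]) simp
  have h1: "?thesis" if "208/100 \<le> x" "x \<le> 245/100"
    by (rule piece[OF that(1) that(2) _ assms(1,4,5,6,7,8) num1]) simp
  have h2: "?thesis" if "245/100 \<le> x" "x \<le> 283/100"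
    by (rule piece[OF that(1) that(2) _ assms(1,4,5,6,7,8) num2]) simp
  have h3: "?thesis" if "283/100 \<le> x" "x \<le> 322/100"
    by (rule piece[OF that(1) that(2) _ assms(1,4,5,6,7,8) num3]) simp
  have h4: "?thesis" if "322/100 \<le> x" "x \<le> 36/10"
    by (rule piece[OF that(1) that(2) _ assms(1,4,5,6,7,8) num4]) simp
  have h5: "?thesis" if "36/10 \<le> x" "x \<le> 395/100"
    by (rule piece[OF that(1) that(2) _ assms(1,4,5,6,7,8) num5]) simp
  have h6: "?thesis" if "395/100 \<le> x" "x \<le> 426/100"
    by (rule piece[OF that(1) that(2) _ assms(1,4,5,6,7,8) num6]) simp
  have h7: "?thesis" if "426/100 \<le> x" "x \<le> 453/100"
    by (rule piece[OF that(1) that(2) _ assms(1,4,5,6,7,8) num7]) simp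
  have h8: "?thesis" if "453/100 \<le> x" "x \<le> 476/100"
    by (rule piece[OF that(1) that(2) _ assms(1,4,5,6,7,8) num8]) simp
  have h9: "?thesis" if "476/100 \<le> x" "x \<le> 495/100"
    by (rule piece[OF that(1) that(2) _ assms(1,4,5,6,7,8) num9]) simp
  have h10: "?thesis" if "495/100 \<le> x" "x \<le> 5"
    by (rule piece[OF that(1) that(2) _ assms(1,4,5,6,7,8) num10]) simp
  show ?thesis
  proof (cases "x \<le> 208/100")
    case True then show ?thesis using h0 lo by simp
  next
    case False
    note False0 = False
    show ?thesis
    proof (cases "x \<le> 245/100")
      case True then show ?thesis using h1 False0 by simp
    next
      case False
      note False1 = False
      show ?thesis
      proof (cases "x \<le> 283/100")
        case True then show ?thesis using h2 False1 by simp
      next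
        case False
        note False2 = False
        show ?thesis
        proof (cases "x \<le> 322/100")
          case True then show ?thesis using h3 False2 by simp
        next
          case False
          note False3 = False
          show ?thesis
          proof (cases "x \<le> 36/10")
            case True then show ?thesis using h4 False3 by simp
          next
            case False
            note False4 = False
            show ?thesis
            proof (cases "x \<le> 395/100")
              case True then show ?thesis using h5 False4 by simp
            next
              case False
              note False5 = False
              show ?thesis
              proof (cases "x \<le> 426/100")
                case True then show ?thesis using h6 False5 by simp
              next
                case False
                note False6 = False
                show ?thesis
                proof (cases "x \<le> 453/100")
                  case True then show ?thesis using h7 False6 by simp
                next
                  case False
                  note False7 = False
                  show ?thesis
                  proof (cases "x \<le> 476/100")
                    case True then show ?thesis using h8 False7 by simp
                  next
                    case False
                    note False8 = False
                    show ?thesis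
                    proof (cases "x \<le> 495/100")
                      case True then show ?thesis using h9 False8 by simp
                    next
                      case False
                      then show ?thesis using h10 False assms(2) by simp
                    qed
                  qed
                qed
              qed
            qed
          qed
        qed
      qed
    qed
  qed
qed


lemma alg4: fixes S P C x a b :: real
  assumes "S > 0" "S * S = P" "x \<noteq> 0"
  shows "C * ((3 - x\<^sup>2) / x^4) * S^7 + (real 7 * S^(7 - Suc 0) * (inverse S / 2 * (2 * a + 2 * b))) * (C * ((x\<^sup>2 - 1) / x^3))
     = C * S^5 * (((3 - x\<^sup>2) * P + 7 * x * (x\<^sup>2 - 1) * (a + b)) / x^4)"
  unfolding assms(2)[symmetric] using assms(1,3) by (simp add: field_simps eval_nat_numeral)

lemma key_ineq: fixes x C d1 d2 :: real
  assumes x: "1 < x" "x \<le> 5" and C: "3 \<le> C" "omega x = C * (x\<^sup>2 - 1) / x^3"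
    and d1: "(psi1 has_real_derivative d1) (at x)" "0 \<le> d1"
    and d2: "(psi2 has_real_derivative d2) (at x)"
  shows "0 \<le> (3 - x\<^sup>2) * ((psi1 x)\<^sup>2 + (psi2 x)\<^sup>2) + 7 * x * (x\<^sup>2 - 1) * (psi1 x * d1 + psi2 x * d2)"
proof -
  define p1 where "p1 = psi1 x"
  define p2 where "p2 = psi2 x"
  define P where "P = p1\<^sup>2 + p2\<^sup>2"
  have p1: "0 < p1" "p1 \<le> (3*pi/4) * (1 - 1/(2*x\<^sup>2))" using psi1_bounds[OF x(1)] by (auto simp: p1_def)
  have p2: "(3/2) * (1 - 1/x\<^sup>2)\<^sup>2 * (3*pi/16 + (1 - 1/x\<^sup>2) * (5*pi/64)) \<le> p2"
           "p2 \<le> (3/2) * (1 - 1/x\<^sup>2)\<^sup>2 * (3*pi/16) * x" using psi2_bounds[OF x(1)] by (auto simp: p2_def)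
  have x2: "1 < x\<^sup>2" using x by (simp add: one_less_power)
  then have "0 \<le> 1 - 1/x\<^sup>2" by (simp add: divide_le_eq_1)
  then have "0 \<le> (3/2) * (1 - 1/x\<^sup>2)\<^sup>2 * (3*pi/16 + (1 - 1/x\<^sup>2) * (5*pi/64))"
    by (intro mult_nonneg_nonneg add_nonneg_nonneg) auto
  then have p20: "0 \<le> p2" using p2(1) by linarith
  have om: "omega x = d2 * p1 - p2 * d1"
    unfolding omega_def p1_def p2_def using vd_within[OF d1(1)] vd_within[OF d2] x by simp
  have id: "p1 * (p1 * d1 + p2 * d2) = d1 * P + p2 * (d2 * p1 - p2 * d1)"
    unfolding P_def by (simp add: algebra_simps power2_eq_square)
  have "x * (x\<^sup>2 - 1) * (p2 * omega x) = C * ((x\<^sup>2 - 1)\<^sup>2 / x\<^sup>2) * p2"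
  proof -
    have g: "x * Y * (p * (C * Y / x^3)) = C * (Y\<^sup>2 / x\<^sup>2) * p" if "x \<noteq> 0" for Y p :: real
      using that by (simp add: field_simps power2_eq_square power3_eq_cube)
    show ?thesis unfolding C(2) using g[of "x\<^sup>2 - 1" p2] x by (simp add: mult.assoc)
  qed
  then have main: "p1 * ((3 - x\<^sup>2) * P + 7 * x * (x\<^sup>2 - 1) * (p1 * d1 + p2 * d2))
      = (3 - x\<^sup>2) * P * p1 + 7 * x * (x\<^sup>2 - 1) * d1 * P + 7 * C * ((x\<^sup>2 - 1)\<^sup>2 / x\<^sup>2) * p2"
  proof -
    assume h: "x * (x\<^sup>2 - 1) * (p2 * omega x) = C * ((x\<^sup>2 - 1)\<^sup>2 / x\<^sup>2) * p2"
    have "p1 * ((3 - x\<^sup>2) * P + 7 * x * (x\<^sup>2 - 1) * (p1 * d1 + p2 * d2))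
       = (3 - x\<^sup>2) * P * p1 + 7 * x * (x\<^sup>2 - 1) * (p1 * (p1 * d1 + p2 * d2))" by (simp add: algebra_simps)
    also have "\<dots> = (3 - x\<^sup>2) * P * p1 + 7 * x * (x\<^sup>2 - 1) * d1 * P + 7 * (x * (x\<^sup>2 - 1) * (p2 * omega x))"
      unfolding id om by (simp add: algebra_simps)
    finally show ?thesis unfolding h by simp
  qed
  have t2: "0 \<le> 7 * x * (x\<^sup>2 - 1) * d1 * P" using x x2 d1(2) unfolding P_def by simp
  have "0 \<le> (3 - x\<^sup>2) * P * p1 + 7 * C * ((x\<^sup>2 - 1)\<^sup>2 / x\<^sup>2) * p2"
  proof (cases "3 \<le> x\<^sup>2")
    case True
    have "(x\<^sup>2 - 3) * (p1\<^sup>2 + p2\<^sup>2) * p1 \<le> 7 * C * ((x\<^sup>2 - 1)\<^sup>2 / x\<^sup>2) * p2"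
      by (rule all_pieces[OF True x(2) _ C(1) _ p1(2) p2]) (use x p1 in auto)
    then show ?thesis unfolding P_def by (simp add: algebra_simps)
  next
    case False
    then have "0 \<le> (3 - x\<^sup>2) * P * p1" using p1 unfolding P_def by simp
    moreover have "0 \<le> 7 * C * ((x\<^sup>2 - 1)\<^sup>2 / x\<^sup>2) * p2" using C(1) p20 by simp
    ultimately show ?thesis by linarith
  qed
  then have "0 \<le> p1 * ((3 - x\<^sup>2) * P + 7 * x * (x\<^sup>2 - 1) * (p1 * d1 + p2 * d2))"
    unfolding main using t2 by linarith
  then have "0 \<le> (3 - x\<^sup>2) * P + 7 * x * (x\<^sup>2 - 1) * (p1 * d1 + p2 * d2)"
    using p1(1) by (simp add: zero_le_mult_iff)
  then show ?thesis unfolding P_def p1_def p2_def .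
qed


lemma G_deriv: fixes x C d1 d2 :: real
  assumes x: "1 < x" and d1: "(psi1 has_real_derivative d1) (at x)" and d2: "(psi2 has_real_derivative d2) (at x)"
  shows "((\<lambda>x. C * ((x\<^sup>2 - 1) / x^3) * sqrt ((psi1 x)\<^sup>2 + (psi2 x)\<^sup>2) ^ 7) has_real_derivative
     C * sqrt ((psi1 x)\<^sup>2 + (psi2 x)\<^sup>2) ^ 5 * (((3 - x\<^sup>2) * ((psi1 x)\<^sup>2 + (psi2 x)\<^sup>2)
        + 7 * x * (x\<^sup>2 - 1) * (psi1 x * d1 + psi2 x * d2)) / x^4)) (at x)"
proof -
  define P where "P = (\<lambda>x. (psi1 x)\<^sup>2 + (psi2 x)\<^sup>2)"
  have dP: "(P has_real_derivative (2 * (psi1 x * d1) + 2 * (psi2 x * d2))) (at x)"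
    unfolding P_def using d1 d2 by (auto intro!: derivative_eq_intros)
  have Ppos: "0 < P x" unfolding P_def using psi1_bounds(1)[OF x] by (simp add: add_pos_nonneg)
  have dS: "((\<lambda>x. sqrt (P x)) has_real_derivative (inverse (sqrt (P x)) / 2) * (2 * (psi1 x * d1) + 2 * (psi2 x * d2))) (at x)"
    by (rule DERIV_chain2[OF DERIV_real_sqrt[OF Ppos] dP])
  have dS7: "((\<lambda>x. sqrt (P x) ^ 7) has_real_derivative real 7 * sqrt (P x) ^ (7 - Suc 0) * ((inverse (sqrt (P x)) / 2) * (2 * (psi1 x * d1) + 2 * (psi2 x * d2)))) (at x)"
    by (rule DERIV_chain2[OF DERIV_pow dS])
  have dh: "((\<lambda>x. C * ((x\<^sup>2 - 1) / x^3)) has_real_derivative C * ((3 - x\<^sup>2) / x^4)) (at x)"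
    using x by (auto intro!: derivative_eq_intros simp: field_simps eval_nat_numeral)
  have D: "((\<lambda>x. C * ((x\<^sup>2 - 1) / x^3) * sqrt (P x) ^ 7) has_real_derivative
     C * ((3 - x\<^sup>2) / x^4) * sqrt (P x) ^ 7 + (real 7 * sqrt (P x) ^ (7 - Suc 0) * ((inverse (sqrt (P x)) / 2) * (2 * (psi1 x * d1) + 2 * (psi2 x * d2)))) * (C * ((x\<^sup>2 - 1) / x^3))) (at x)"
    by (rule DERIV_mult[OF dh dS7])
  have S: "sqrt (P x) > 0" "sqrt (P x) * sqrt (P x) = P x" using Ppos by auto
  show ?thesis using D alg4[OF S, of x C "psi1 x * d1" "psi2 x * d2"] x unfolding P_def by simp
qed

theorem mainTheorem11:
  shows "mono_on {1..5::real} (\<lambda>x. omega x * pplus x ^ 7)"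
proof -
  obtain C where C: "3 \<le> C" "\<And>x. 1 < x \<Longrightarrow> omega x = C * (x\<^sup>2 - 1) / x^3" using omega_closed by blast
  define G where "G x = C * ((x\<^sup>2 - 1) / x^3) * sqrt ((psi1 x)\<^sup>2 + (psi2 x)\<^sup>2) ^ 7" for x
  have FG: "omega x * pplus x ^ 7 = G x" if "1 < x" for x
    unfolding G_def pplus_def C(2)[OF that] by simp
  have G0: "0 \<le> G x" if "1 < x" for x
  proof -
    have "1 < x\<^sup>2" using that by (simp add: one_less_power)
    then show ?thesis unfolding G_def using that C(1) by simp
  qed
  have Gd: "\<exists>y. DERIV G x :> y \<and> 0 \<le> y" if x: "1 < x" "x \<le> 5" for x
  proof -
    note d1 = psi1_deriv[OF x(1)] and d2 = psi2_deriv[of x]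
    have x1: "1 \<le> x" using x by simp
    let ?d1 = "(9/2) * Ipow 2 (1/2) (1/x\<^sup>2) / x^3"
    let ?d2 = "3 / x^3 * (2 * (1 - 1/x\<^sup>2) * Ipow 4 (-1/2) (1 - 1/x\<^sup>2)
       + (1/2) * (1 - 1/x\<^sup>2)\<^sup>2 * Ipow 6 (-3/2) (1 - 1/x\<^sup>2))"
    have k: "0 \<le> (3 - x\<^sup>2) * ((psi1 x)\<^sup>2 + (psi2 x)\<^sup>2) + 7 * x * (x\<^sup>2 - 1) * (psi1 x * ?d1 + psi2 x * ?d2)"
      by (rule key_ineq[OF x C(1) C(2)[OF x(1)] d1 psi1_deriv_nonneg[OF x(1)] d2[OF x1]])
    have "(G has_real_derivative
     C * sqrt ((psi1 x)\<^sup>2 + (psi2 x)\<^sup>2) ^ 5 * (((3 - x\<^sup>2) * ((psi1 x)\<^sup>2 + (psi2 x)\<^sup>2)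
        + 7 * x * (x\<^sup>2 - 1) * (psi1 x * ?d1 + psi2 x * ?d2)) / x^4)) (at x)"
      unfolding G_def[abs_def] by (rule G_deriv[OF x(1) d1 d2[OF x1]])
    moreover have "0 \<le> C * sqrt ((psi1 x)\<^sup>2 + (psi2 x)\<^sup>2) ^ 5 * (((3 - x\<^sup>2) * ((psi1 x)\<^sup>2 + (psi2 x)\<^sup>2)
        + 7 * x * (x\<^sup>2 - 1) * (psi1 x * ?d1 + psi2 x * ?d2)) / x^4)"
      using k C(1) x by (intro mult_nonneg_nonneg divide_nonneg_pos) auto
    ultimately show ?thesis by blast
  qed
  show ?thesis
  proof (rule mono_onI)
    fix r s :: real assume rs: "r \<in> {1..5}" "s \<in> {1..5}" "r \<le> s"
    show "omega r * pplus r ^ 7 \<le> omega s * pplus s ^ 7"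
    proof (cases "r = 1")
      case True
      then have "omega r * pplus r ^ 7 = 0" using omega_1 by simp
      moreover have "0 \<le> omega s * pplus s ^ 7"
      proof (cases "s = 1")
        case True then show ?thesis using omega_1 by simp
      next
        case False then have "1 < s" using rs by simp
        then show ?thesis using FG G0 by simp
      qed
      ultimately show ?thesis by linarith
    next
      case False
      then have r1: "1 < r" using rs by simp
      have "G r \<le> G s"
        by (rule DERIV_nonneg_imp_nondecreasing[OF rs(3)]) (use Gd r1 rs in auto)
      then show ?thesis using FG r1 rs by simp
    qed
  qed
qed

end
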